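(* In the setting described in the context, for any $a_1,a_2\in\mathfrak{z}$ and any positive integer $q$, $$\mathrm{S}^r(a_1a_2^q)=\sum_{\substack{i,j\geq 0\\ i+j\le q}}(-1)^i r^{q-j}(1-r)^j\, a_2^i a_1 a_2^j\ast \mathrm{S}(a_2^{q-i-j}),$$ where $\mathrm{S}=\mathrm{S}^1$. Equivalently, for a formal variable $u$, $\mathrm{S}^r\!\left(a_1\frac{1}{1-a_2u}\right)=\frac{1}{1+a_2ru}\,a_1\,\frac{1}{1-a_2(1-r)u}\ast \mathrm{S}\!\left(\frac{1}{1-a_2ru}\right)$.
   Context: $\mathfrak{A}$ is a commutative $\mathbb{Q}$-algebra, $A$ a set of non-commutative letters, $\mathfrak{h}^1$ the non-commutative polynomial algebra over $\mathfrak{A}$ generated by $A$, and $\mathfrak{z}$ the $\mathfrak{A}$-span of $A$, equipped with a commutative (not necessarily unital) $\mathfrak{A}$-algebra product $\circ$. This acts on $\mathfrak{h}^1$ by $\mathfrak{A}$-linearity and $a\circ 1_w=0$, $a\circ(bw)=(a\circ b)w$ ($a,b\in A$, $w$ a word, $1_w$ the empty word). The harmonic product $\ast$ on $\mathfrak{h}^1$ is the $\mathfrak{A}$-bilinear product with $1_w\ast w=w\ast 1_w=w$ and $aw_1\ast bw_2=a(w_1\ast bw_2)+b(aw_1\ast w_2)+(a\circ b)(w_1\ast w_2)$ for $a,b\in A$ and words $w,w_1,w_2$ (extended $r$-linearly and to formal power series in $u$). For a variable $r$, $\mathrm{S}^r$ is the $\mathfrak{A}[r]$-linear map on $\mathfrak{h}^1[r]$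 with $\mathrm{S}^r(1_w)=1_w$ and $\mathrm{S}^r(aw)=a\mathrm{S}^r(w)+r\,a\circ\mathrm{S}^r(w)$ for $a\in A$ and words $w$; $\mathrm{S}:=\mathrm{S}^1$. Juxtaposition is concatenation; $a^n$ is the $n$-fold concatenation power ($a^0=1_w$). *)

theory Defs
  imports "HOL-Library.Poly_Mapping"
begin

(* Elements of h1 (non-commutative polynomials over the coefficient ring 'k in
the letters of type 'a) are finitely supported functions from words to 'k,
i.e. values of type ('a list <Rightarrow><^sub>0 'k).  Elements of z (the span of the letters)
are values of type ('a <Rightarrow><^sub>0 'k). *)

definition smul :: "'k::comm_ring_1 \<Rightarrow> ('b \<Rightarrow>\<^sub>0 'k) \<Rightarrow> ('b \<Rightarrow>\<^sub>0 'k)" where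
  "smul c p = Poly_Mapping.map (\<lambda>x. c * x) p"

definition lin :: "('b \<Rightarrow> ('c \<Rightarrow>\<^sub>0 'k::comm_ring_1)) \<Rightarrow> ('b \<Rightarrow>\<^sub>0 'k) \<Rightarrow> ('c \<Rightarrow>\<^sub>0 'k)" where
  "lin f p = (\<Sum>x\<in>Poly_Mapping.keys p. smul (Poly_Mapping.lookup p x) (f x))"

definition wrd :: "'a list \<Rightarrow> ('a list \<Rightarrow>\<^sub>0 'k::comm_ring_1)" where
  "wrd w = Poly_Mapping.single w 1"

definition emb :: "('a \<Rightarrow>\<^sub>0 'k::comm_ring_1) \<Rightarrow> ('a list \<Rightarrow>\<^sub>0 'k)" where
  "emb z = lin (\<lambda>a. wrd [a]) z"

definition conc :: "('a list \<Rightarrow>\<^sub>0 'k::comm_ring_1) \<Rightarrow> ('a list \<Rightarrow>\<^sub>0 'k) \<Rightarrow> ('a list \<Rightarrow>\<^sub>0 'k)" where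
  "conc p q = lin (\<lambda>v. lin (\<lambda>w. wrd (v @ w)) q) p"

primrec zpow :: "('a \<Rightarrow>\<^sub>0 'k::comm_ring_1) \<Rightarrow> nat \<Rightarrow> ('a list \<Rightarrow>\<^sub>0 'k)" where
  "zpow z 0 = wrd []"
| "zpow z (Suc n) = conc (emb z) (zpow z n)"

definition prep :: "'a \<Rightarrow> ('a list \<Rightarrow>\<^sub>0 'k::comm_ring_1) \<Rightarrow> ('a list \<Rightarrow>\<^sub>0 'k)" where
  "prep a p = lin (\<lambda>w. wrd (a # w)) p"

(* The product <circ> on z is given on letters by a function from pairs of letters to z;
its bilinear extension to z: *)
definition zcirc :: "('a \<Rightarrow> 'a \<Rightarrow> ('a \<Rightarrow>\<^sub>0 'k::comm_ring_1)) \<Rightarrow> ('a \<Rightarrow>\<^sub>0 'k) \<Rightarrow> ('a \<Rightarrow>\<^sub>0 'k) \<Rightarrow> ('a \<Rightarrow>\<^sub>0 'k)" where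
  "zcirc circ x y = lin (\<lambda>a. lin (\<lambda>b. circ a b) y) x"

definition comm_circ :: "('a \<Rightarrow> 'a \<Rightarrow> ('a \<Rightarrow>\<^sub>0 'k::comm_ring_1)) \<Rightarrow> bool" where
  "comm_circ circ \<longleftrightarrow>
     (\<forall>a b. circ a b = circ b a) \<and>
     (\<forall>x y z. zcirc circ (zcirc circ x y) z = zcirc circ x (zcirc circ y z))"

fun actw :: "('a \<Rightarrow> 'a \<Rightarrow> ('a \<Rightarrow>\<^sub>0 'k::comm_ring_1)) \<Rightarrow> 'a \<Rightarrow> 'a list \<Rightarrow> ('a list \<Rightarrow>\<^sub>0 'k)" where
  "actw circ a [] = 0"
| "actw circ a (b # w) = lin (\<lambda>c. wrd (c # w)) (circ a b)"

definition act :: "('a \<Rightarrow> 'a \<Rightarrow> ('a \<Rightarrow>\<^sub>0 'k::comm_ring_1)) \<Rightarrow> 'a \<Rightarrow> ('a list \<Rightarrow>\<^sub>0 'k) \<Rightarrow> ('a list \<Rightarrow>\<^sub>0 'k)" where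
  "act circ a p = lin (actw circ a) p"

function harmw :: "('a \<Rightarrow> 'a \<Rightarrow> ('a \<Rightarrow>\<^sub>0 'k::comm_ring_1)) \<Rightarrow> 'a list \<Rightarrow> 'a list \<Rightarrow> ('a list \<Rightarrow>\<^sub>0 'k)" where
  "harmw circ [] w = wrd w"
| "harmw circ (a # v) [] = wrd (a # v)"
| "harmw circ (a # v) (b # w) =
     prep a (harmw circ v (b # w)) + prep b (harmw circ (a # v) w)
     + lin (\<lambda>c. prep c (harmw circ v w)) (circ a b)"
  by pat_completeness auto
termination by (relation "measure (\<lambda>(_, v, w). length v + length w)") auto

definition harm :: "('a \<Rightarrow> 'a \<Rightarrow> ('a \<Rightarrow>\<^sub>0 'k::comm_ring_1)) \<Rightarrow> ('a list \<Rightarrow>\<^sub>0 'k) \<Rightarrow> ('a list \<Rightarrow>\<^sub>0 'k) \<Rightarrow> ('a list \<Rightarrow>\<^sub>0 'k)" where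
  "harm circ p q = lin (\<lambda>v. lin (\<lambda>w. harmw circ v w) q) p"

primrec Srw :: "('a \<Rightarrow> 'a \<Rightarrow> ('a \<Rightarrow>\<^sub>0 'k::comm_ring_1)) \<Rightarrow> 'k \<Rightarrow> 'a list \<Rightarrow> ('a list \<Rightarrow>\<^sub>0 'k)" where
  "Srw circ r [] = wrd []"
| "Srw circ r (a # w) = prep a (Srw circ r w) + smul r (act circ a (Srw circ r w))"

definition Sr :: "('a \<Rightarrow> 'a \<Rightarrow> ('a \<Rightarrow>\<^sub>0 'k::comm_ring_1)) \<Rightarrow> 'k \<Rightarrow> ('a list \<Rightarrow>\<^sub>0 'k) \<Rightarrow> ('a list \<Rightarrow>\<^sub>0 'k)" where
  "Sr circ r p = lin (Srw circ r) p"

end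

theory Submission
  imports Defs "HOL-Library.Function_Algebras"
begin

lemma lookup_smul [simp]: "Poly_Mapping.lookup (smul c p) x = c * Poly_Mapping.lookup p x"
  unfolding smul_def by transfer (simp add: when_def)

lemma keys_smul: "Poly_Mapping.keys (smul c p) \<subseteq> Poly_Mapping.keys p"
  by (auto simp: in_keys_iff)

lemma smul_add_right: "smul c (p + q) = smul c p + smul c q"
  by (rule poly_mapping_eqI) (simp add: lookup_add algebra_simps)
lemma smul_add_left: "smul (c + d) p = smul c p + smul d p"
  by (rule poly_mapping_eqI) (simp add: lookup_add algebra_simps)
lemma smul_smul [simp]: "smul c (smul d p) = smul (c * d) p"
  by (rule poly_mapping_eqI) (simp add: algebra_simps)
lemma smul_one [simp]: "smul 1 p = p"
  by (rule poly_mapping_eqI) simp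
lemma smul_zero_left [simp]: "smul 0 p = 0"
  by (rule poly_mapping_eqI) simp
lemma smul_zero_right [simp]: "smul c 0 = 0"
  by (rule poly_mapping_eqI) simp
lemma smul_neg_right: "smul c (- p) = - smul c p"
  by (rule poly_mapping_eqI) simp
lemma smul_neg_left: "smul (- c) p = - smul c p"
  by (rule poly_mapping_eqI) simp
lemma smul_diff_right: "smul c (p - q) = smul c p - smul c q"
  by (rule poly_mapping_eqI) (simp add: lookup_minus algebra_simps)
lemma smul_sum: "smul c (sum f I) = (\<Sum>i\<in>I. smul c (f i))"
  by (induction I rule: infinite_finite_induct) (auto simp: smul_add_right)
lemma smul_single: "smul c (Poly_Mapping.single x d) = Poly_Mapping.single x (c * d)"
  by (rule poly_mapping_eqI) (simp add: lookup_single when_def)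

lemma lin_eq_sum:
  assumes "finite S" "Poly_Mapping.keys p \<subseteq> S"
  shows "lin f p = (\<Sum>x\<in>S. smul (Poly_Mapping.lookup p x) (f x))"
  unfolding lin_def
  by (rule sum.mono_neutral_left) (use assms in \<open>auto simp: in_keys_iff\<close>)

lemma lin_add [simp]: "lin f (p + q) = lin f p + lin f q"
proof -
  let ?S = "Poly_Mapping.keys p \<union> Poly_Mapping.keys q"
  have "Poly_Mapping.keys (p + q) \<subseteq> ?S" by (rule keys_add)
  then show ?thesis
    by (simp add: lin_eq_sum[of ?S] lookup_add smul_add_left sum.distrib)
qed

lemma lin_smul [simp]: "lin f (smul c p) = smul c (lin f p)"
  by (simp add: lin_eq_sum[of "Poly_Mapping.keys p"] keys_smul smul_sum mult.commute)

lemma lin_zero [simp]: "lin f 0 = 0"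
  by (simp add: lin_def)

lemma lin_neg [simp]: "lin f (- p) = - lin f p"
proof -
  have "lin f (- p) + lin f p = 0" by (simp flip: lin_add)
  then show ?thesis by (simp add: eq_neg_iff_add_eq_0)
qed

lemma lin_diff [simp]: "lin f (p - q) = lin f p - lin f q"
  by (metis diff_conv_add_uminus lin_add lin_neg)

lemma lin_sum [simp]: "lin f (sum g I) = (\<Sum>i\<in>I. lin f (g i))"
  by (induction I rule: infinite_finite_induct) auto

lemma lin_single [simp]: "lin f (Poly_Mapping.single x c) = smul c (f x)"
  by (simp add: lin_eq_sum[of "{x}"] lookup_single)

lemma lin_wrd [simp]: "lin f (wrd w) = f w"
  by (simp add: wrd_def)

lemma lin_fadd [simp]: "lin (\<lambda>x. f x + g x) p = lin f p + lin g p"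
  by (simp add: lin_def smul_add_right sum.distrib)

lemma lin_fzero [simp]: "lin (\<lambda>x. 0) p = 0"
  by (simp add: lin_def)

lemma lin_fneg [simp]: "lin (\<lambda>x. - f x) p = - lin f p"
  by (simp add: lin_def smul_neg_right sum_negf)

lemma lin_fdiff [simp]: "lin (\<lambda>x. f x - g x) p = lin f p - lin g p"
  by (simp add: lin_def smul_diff_right sum_subtractf)

lemma smul_lin: "smul c (lin f p) = lin (\<lambda>x. smul c (f x)) p"
  by (simp add: lin_def smul_sum mult.commute)

lemma lin_fsum [simp]: "lin (\<lambda>x. \<Sum>i\<in>I. F i x) p = (\<Sum>i\<in>I. lin (F i) p)"
  by (simp add: lin_def smul_sum sum.swap[of _ I])

lemma lin_lin [simp]: "lin g (lin f p) = lin (\<lambda>x. lin g (f x)) p"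
proof -
  have "lin g (lin f p) = (\<Sum>x\<in>Poly_Mapping.keys p. smul (Poly_Mapping.lookup p x) (lin g (f x)))"
    by (simp only: lin_def[of f p] lin_sum lin_smul)
  then show ?thesis by (simp add: lin_def[of "\<lambda>x. lin g (f x)"])
qed

lemma lin_swap: "lin (\<lambda>u. lin (\<lambda>v. F u v) B) A = lin (\<lambda>v. lin (\<lambda>u. F u v) A) B"
  by (simp add: lin_def smul_sum sum.swap[of _ "Poly_Mapping.keys A"] mult.commute)

lemma lin_cong: "(\<And>x. x \<in> Poly_Mapping.keys p \<Longrightarrow> f x = g x) \<Longrightarrow> lin f p = lin g p"
  by (simp add: lin_def)

lemma lin_id: "lin (\<lambda>x. Poly_Mapping.single x 1) p = p"
  by (rule poly_mapping_eqI)
     (simp add: lin_def lookup_sum smul_single lookup_single when_def in_keys_iff)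


lemma wrd_single: "wrd w = Poly_Mapping.single w 1" by (simp add: wrd_def)

lemma wrd_fun: "wrd = (\<lambda>x. Poly_Mapping.single x 1)" by (rule ext) (simp add: wrd_def)

lemma lin_wrd_id [simp]: "lin wrd p = p"
  using lin_id[of p] by (simp add: wrd_fun)

lemma swap_inner:
  "lin (\<lambda>c. lin (\<lambda>v. lin (\<lambda>w. K c v w) q) p) A = lin (\<lambda>v. lin (\<lambda>w. lin (\<lambda>c. K c v w) A) q) p"
proof -
  have "lin (\<lambda>c. lin (\<lambda>v. lin (\<lambda>w. K c v w) q) p) A = lin (\<lambda>v. lin (\<lambda>c. lin (\<lambda>w. K c v w) q) A) p"
    by (rule lin_swap)
  also have "\<dots> = lin (\<lambda>v. lin (\<lambda>w. lin (\<lambda>c. K c v w) A) q) p"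
    by (rule arg_cong[where f="\<lambda>f. lin f p"], rule ext, rule lin_swap)
  finally show ?thesis .
qed

lemma conc_add1 [simp]: "conc (p + p') q = conc p q + conc p' q" by (simp add: conc_def)
lemma conc_add2 [simp]: "conc p (q + q') = conc p q + conc p q'" by (simp add: conc_def)
lemma conc_smul1 [simp]: "conc (smul c p) q = smul c (conc p q)" by (simp add: conc_def)
lemma conc_smul2 [simp]: "conc p (smul c q) = smul c (conc p q)" by (simp add: conc_def smul_lin)
lemma conc_zero1 [simp]: "conc 0 q = 0" by (simp add: conc_def)
lemma conc_zero2 [simp]: "conc p 0 = 0" by (simp add: conc_def)
lemma conc_neg1 [simp]: "conc (- p) q = - conc p q" by (simp add: conc_def)
lemma conc_neg2 [simp]: "conc p (- q) = - conc p q" by (simp add: conc_def)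
lemma conc_diff1 [simp]: "conc (p - p') q = conc p q - conc p' q" by (simp add: conc_def)
lemma conc_diff2 [simp]: "conc p (q - q') = conc p q - conc p q'" by (simp add: conc_def)
lemma conc_sum1 [simp]: "conc (sum f I) q = (\<Sum>i\<in>I. conc (f i) q)" by (simp add: conc_def)
lemma conc_sum2 [simp]: "conc p (sum f I) = (\<Sum>i\<in>I. conc p (f i))" by (simp add: conc_def)
lemma conc_wrd [simp]: "conc (wrd v) (wrd w) = wrd (v @ w)" by (simp add: conc_def)
lemma conc_nil1 [simp]: "conc (wrd []) p = p" by (simp add: conc_def)
lemma conc_nil2 [simp]: "conc p (wrd []) = p" by (simp add: conc_def)
lemma conc_assoc: "conc (conc p q) s = conc p (conc q s)" by (simp add: conc_def)

lemma emb_add [simp]: "emb (x + y) = emb x + emb y" by (simp add: emb_def)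
lemma emb_smul [simp]: "emb (smul c x) = smul c (emb x)" by (simp add: emb_def)
lemma emb_zero [simp]: "emb 0 = 0" by (simp add: emb_def)
lemma emb_neg [simp]: "emb (- x) = - emb x" by (simp add: emb_def)
lemma emb_diff [simp]: "emb (x - y) = emb x - emb y" by (simp add: emb_def)
lemma emb_sum [simp]: "emb (sum f I) = (\<Sum>i\<in>I. emb (f i))" by (simp add: emb_def)

lemma conc_emb: "conc (emb x) p = lin (\<lambda>a. prep a p) x"
  by (simp add: conc_def emb_def prep_def)

context
  fixes circ :: "'a \<Rightarrow> 'a \<Rightarrow> ('a \<Rightarrow>\<^sub>0 'k::comm_ring_1)"
begin

lemma zc_add1 [simp]: "zcirc circ (x + x') y = zcirc circ x y + zcirc circ x' y" by (simp add: zcirc_def)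
lemma zc_add2 [simp]: "zcirc circ x (y + y') = zcirc circ x y + zcirc circ x y'" by (simp add: zcirc_def)
lemma zc_smul1 [simp]: "zcirc circ (smul c x) y = smul c (zcirc circ x y)" by (simp add: zcirc_def)
lemma zc_smul2 [simp]: "zcirc circ x (smul c y) = smul c (zcirc circ x y)" by (simp add: zcirc_def smul_lin)
lemma zc_zero1 [simp]: "zcirc circ 0 y = 0" by (simp add: zcirc_def)
lemma zc_zero2 [simp]: "zcirc circ x 0 = 0" by (simp add: zcirc_def)
lemma zc_neg1 [simp]: "zcirc circ (- x) y = - zcirc circ x y" by (simp add: zcirc_def)
lemma zc_neg2 [simp]: "zcirc circ x (- y) = - zcirc circ x y" by (simp add: zcirc_def)
lemma zc_sum1 [simp]: "zcirc circ (sum f I) y = (\<Sum>i\<in>I. zcirc circ (f i) y)" by (simp add: zcirc_def)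
lemma zc_sum2 [simp]: "zcirc circ x (sum f I) = (\<Sum>i\<in>I. zcirc circ x (f i))" by (simp add: zcirc_def)

lemma harm_add1 [simp]: "harm circ (p + p') q = harm circ p q + harm circ p' q" by (simp add: harm_def)
lemma harm_add2 [simp]: "harm circ p (q + q') = harm circ p q + harm circ p q'" by (simp add: harm_def)
lemma harm_smul1 [simp]: "harm circ (smul c p) q = smul c (harm circ p q)" by (simp add: harm_def)
lemma harm_smul2 [simp]: "harm circ p (smul c q) = smul c (harm circ p q)" by (simp add: harm_def smul_lin)
lemma harm_zero1 [simp]: "harm circ 0 q = 0" by (simp add: harm_def)
lemma harm_zero2 [simp]: "harm circ p 0 = 0" by (simp add: harm_def)
lemma harm_neg1 [simp]: "harm circ (- p) q = - harm circ p q" by (simp add: harm_def)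
lemma harm_neg2 [simp]: "harm circ p (- q) = - harm circ p q" by (simp add: harm_def)
lemma harm_diff1 [simp]: "harm circ (p - p') q = harm circ p q - harm circ p' q" by (simp add: harm_def)
lemma harm_diff2 [simp]: "harm circ p (q - q') = harm circ p q - harm circ p q'" by (simp add: harm_def)
lemma harm_sum1 [simp]: "harm circ (sum f I) q = (\<Sum>i\<in>I. harm circ (f i) q)" by (simp add: harm_def)
lemma harm_sum2 [simp]: "harm circ p (sum f I) = (\<Sum>i\<in>I. harm circ p (f i))" by (simp add: harm_def)

lemma harmw_nil2 [simp]: "harmw circ v [] = wrd v"
  by (cases v) auto

lemma harmw_nil1_fun [simp]: "harmw circ [] = wrd"
  by (rule ext) simp

lemma harm_nil1 [simp]: "harm circ (wrd []) p = p" by (simp add: harm_def)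
lemma harm_nil2 [simp]: "harm circ p (wrd []) = p" by (simp add: harm_def)

lemma harm_rec:
  "harm circ (conc (emb x) p) (conc (emb y) q) =
     conc (emb x) (harm circ p (conc (emb y) q)) + conc (emb y) (harm circ (conc (emb x) p) q)
     + conc (emb (zcirc circ x y)) (harm circ p q)"
proof -
  have L: "harm circ (conc (emb x) p) (conc (emb y) q) =
     lin (\<lambda>a. lin (\<lambda>v. lin (\<lambda>b. lin (\<lambda>w. harmw circ (a # v) (b # w)) q) y) p) x"
    by (simp add: harm_def conc_emb prep_def)
  have T1: "conc (emb x) (harm circ p (conc (emb y) q)) =
     lin (\<lambda>a. lin (\<lambda>v. lin (\<lambda>b. lin (\<lambda>w. prep a (harmw circ v (b # w))) q) y) p) x"
    by (simp add: harm_def conc_emb prep_def)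
  have T2: "conc (emb y) (harm circ (conc (emb x) p) q) =
     lin (\<lambda>a. lin (\<lambda>v. lin (\<lambda>b. lin (\<lambda>w. prep b (harmw circ (a # v) w)) q) y) p) x"
    by (simp add: harm_def conc_emb prep_def lin_swap[where B = y])
  have T3: "conc (emb (zcirc circ x y)) (harm circ p q) =
     lin (\<lambda>a. lin (\<lambda>v. lin (\<lambda>b. lin (\<lambda>w. lin (\<lambda>c. prep c (harmw circ v w)) (circ a b)) q) y) p) x"
  proof -
    let ?K = "\<lambda>c v w. lin (\<lambda>u. wrd (c # u)) (harmw circ v w)"
    have "conc (emb (zcirc circ x y)) (harm circ p q) =
      lin (\<lambda>a. lin (\<lambda>b. lin (\<lambda>c. lin (\<lambda>v. lin (\<lambda>w. ?K c v w) q) p) (circ a b)) y) x"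
      by (simp add: harm_def conc_emb prep_def zcirc_def)
    also have "\<dots> = lin (\<lambda>a. lin (\<lambda>b. lin (\<lambda>v. lin (\<lambda>w. lin (\<lambda>c. ?K c v w) (circ a b)) q) p) y) x"
      by (rule arg_cong[where f="\<lambda>f. lin f x"], rule ext, rule arg_cong[where f="\<lambda>f. lin f y"], rule ext, rule swap_inner)
    also have "\<dots> = lin (\<lambda>a. lin (\<lambda>v. lin (\<lambda>b. lin (\<lambda>w. lin (\<lambda>c. ?K c v w) (circ a b)) q) y) p) x"
      by (rule arg_cong[where f="\<lambda>f. lin f x"], rule ext, rule lin_swap)
    finally show ?thesis by (simp add: prep_def)
  qed
  show ?thesis unfolding L T1 T2 T3 by simp
qed

end

definition actz :: "('a \<Rightarrow> 'a \<Rightarrow> ('a \<Rightarrow>\<^sub>0 'k::comm_ring_1)) \<Rightarrow> ('a \<Rightarrow>\<^sub>0 'k) \<Rightarrow> ('a list \<Rightarrow>\<^sub>0 'k) \<Rightarrow> ('a list \<Rightarrow>\<^sub>0 'k)" where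
  "actz circ x p = lin (\<lambda>a. act circ a p) x"

context
  fixes circ :: "'a \<Rightarrow> 'a \<Rightarrow> ('a \<Rightarrow>\<^sub>0 'k::comm_ring_1)"
begin

lemma actz_add1 [simp]: "actz circ (x + x') p = actz circ x p + actz circ x' p" by (simp add: actz_def)
lemma actz_add2 [simp]: "actz circ x (p + p') = actz circ x p + actz circ x p'" by (simp add: actz_def act_def)
lemma actz_smul1 [simp]: "actz circ (smul c x) p = smul c (actz circ x p)" by (simp add: actz_def)
lemma actz_smul2 [simp]: "actz circ x (smul c p) = smul c (actz circ x p)" by (simp add: actz_def act_def smul_lin)
lemma actz_zero1 [simp]: "actz circ 0 p = 0" by (simp add: actz_def)
lemma actz_zero2 [simp]: "actz circ x 0 = 0" by (simp add: actz_def act_def)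
lemma actz_nil [simp]: "actz circ x (wrd []) = 0" by (simp add: actz_def act_def)

lemma actz_lin: "actz circ x (lin f p) = lin (\<lambda>w. actz circ x (f w)) p"
  by (simp add: actz_def act_def lin_swap[where A = x])

lemma actz_conc_emb: "actz circ x (conc (emb y) p) = conc (emb (zcirc circ x y)) p"
proof -
  have "actz circ x (conc (emb y) p) =
      lin (\<lambda>a. lin (\<lambda>b. lin (\<lambda>w. lin (\<lambda>c. wrd (c # w)) (circ a b)) p) y) x"
    by (simp add: actz_def act_def conc_emb prep_def)
  also have "\<dots> = lin (\<lambda>a. lin (\<lambda>b. lin (\<lambda>c. lin (\<lambda>w. wrd (c # w)) p) (circ a b)) y) x"
    by (rule arg_cong[where f="\<lambda>f. lin f x"], rule ext, rule arg_cong[where f="\<lambda>f. lin f y"], rule ext, rule lin_swap)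
  also have "\<dots> = conc (emb (zcirc circ x y)) p"
    by (simp add: conc_emb prep_def zcirc_def)
  finally show ?thesis .
qed

lemma wrd_cons: "wrd (c # w) = conc (emb (Poly_Mapping.single c 1)) (wrd w)"
  by (simp add: emb_def)

lemma actz_actz:
  assumes "comm_circ circ"
  shows "actz circ x (actz circ y p) = actz circ (zcirc circ x y) p"
proof -
  have as: "zcirc circ (zcirc circ x y) z = zcirc circ x (zcirc circ y z)" for x y z
    using assms by (simp add: comm_circ_def)
  have w: "actz circ x (actz circ y (wrd w)) = actz circ (zcirc circ x y) (wrd w)" for w
  proof (cases w)
    case Nil then show ?thesis by simp
  next
    case (Cons c w')
    then show ?thesis by (simp only: wrd_cons actz_conc_emb as)
  qed
  have "actz circ x (actz circ y p) = actz circ x (actz circ y (lin wrd p))" by simp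
  also have "\<dots> = lin (\<lambda>w. actz circ x (actz circ y (wrd w))) p"
    by (simp only: actz_lin)
  also have "\<dots> = lin (\<lambda>w. actz circ (zcirc circ x y) (wrd w)) p"
    by (simp only: w)
  also have "\<dots> = actz circ (zcirc circ x y) p"
    by (simp only: actz_lin[symmetric] lin_wrd_id)
  finally show ?thesis .
qed

lemma Sr_add [simp]: "Sr circ r (p + p') = Sr circ r p + Sr circ r p'" by (simp add: Sr_def)
lemma Sr_smul [simp]: "Sr circ r (smul c p) = smul c (Sr circ r p)" by (simp add: Sr_def)
lemma Sr_nil [simp]: "Sr circ r (wrd []) = wrd []" by (simp add: Sr_def)

lemma Sr_conc_emb:
  "Sr circ r (conc (emb x) p) = conc (emb x) (Sr circ r p) + smul r (actz circ x (Sr circ r p))"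
  by (simp add: Sr_def conc_emb prep_def actz_def act_def smul_lin)

end

lemma flat3:
  fixes n :: nat and g1 :: "nat \<Rightarrow> nat" and g2 :: "nat \<Rightarrow> nat \<Rightarrow> nat"
  shows "(\<Sum>a\<le>n. \<Sum>b\<le>g1 a. \<Sum>c\<le>g2 a b. f a b c) =
   (\<Sum>(a,b,c)\<in>{(a,b,c). a \<le> n \<and> b \<le> g1 a \<and> c \<le> g2 a b}. f a b c)"
proof -
  have "(\<Sum>a\<le>n. \<Sum>b\<le>g1 a. \<Sum>c\<le>g2 a b. f a b c) =
        (\<Sum>a\<le>n. \<Sum>(b,c)\<in>(SIGMA b:{..g1 a}. {..g2 a b}). f a b c)"
    by (subst sum.Sigma) auto
  also have "\<dots> = (\<Sum>(a,bc)\<in>(SIGMA a:{..n}. (SIGMA b:{..g1 a}. {..g2 a b})). case bc of (b,c) \<Rightarrow> f a b c)"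
    by (subst sum.Sigma) (auto simp: case_prod_unfold)
  also have "\<dots> = (\<Sum>(a,b,c)\<in>{(a,b,c). a \<le> n \<and> b \<le> g1 a \<and> c \<le> g2 a b}. f a b c)"
    by (rule sum.cong) (auto simp: case_prod_unfold)
  finally show ?thesis .
qed

lemma R1:
  "(\<Sum>j\<le>(n::nat). \<Sum>l\<le>j. \<Sum>m\<le>n-j. F l (j-l) m (n-j-m)) =
   (\<Sum>l\<le>n. \<Sum>i\<le>n-l. \<Sum>m\<le>n-l-i. F l i m (n-l-i-m))"
  unfolding flat3
  by (rule sum.reindex_bij_witness[where j="\<lambda>(j,l,m). (l, j-l, m)" and i="\<lambda>(l,i,m). (l+i, l, m)"])
     (auto simp: diff_diff_left add.commute)

lemma R2:
  "(\<Sum>j\<le>(n::nat). \<Sum>l\<le>j. \<Sum>m\<le>n-j. F l (j-l) m (n-j-m)) =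
   (\<Sum>m\<le>n. \<Sum>j\<le>n-m. \<Sum>l\<le>j. F l (j-l) m (n-m-j))"
  unfolding flat3
  by (rule sum.reindex_bij_witness[where j="\<lambda>(j,l,m). (m, j, l)" and i="\<lambda>(m,j,l). (j, l, m)"])
     (auto simp: diff_diff_left add.commute)

lemma R3:
  "(\<Sum>j\<le>(n::nat). \<Sum>l\<le>j. \<Sum>m\<le>n-j. F l (j-l) m (n-j-m)) =
   (\<Sum>s\<le>n. \<Sum>l\<le>s. \<Sum>i\<le>n-s. F l i (s-l) (n-s-i))"
  unfolding flat3
  by (rule sum.reindex_bij_witness[where j="\<lambda>(j,l,m). (l+m, l, j-l)" and i="\<lambda>(s,l,t). (l+t, l, s-l)"])
     (auto simp: diff_diff_left add.commute)


definition del :: "nat \<Rightarrow> ('a list \<Rightarrow>\<^sub>0 'k::comm_ring_1)" where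
  "del n = (if n = 0 then wrd [] else 0)"

definition Lz :: "(nat \<Rightarrow> ('a \<Rightarrow>\<^sub>0 'k::comm_ring_1)) \<Rightarrow> (nat \<Rightarrow> ('a list \<Rightarrow>\<^sub>0 'k)) \<Rightarrow> nat \<Rightarrow> ('a list \<Rightarrow>\<^sub>0 'k)" where
  "Lz x X n = (\<Sum>l\<le>n. conc (emb (x l)) (X (n - l)))"

definition cv :: "('a \<Rightarrow> 'a \<Rightarrow> ('a \<Rightarrow>\<^sub>0 'k::comm_ring_1)) \<Rightarrow> (nat \<Rightarrow> ('a list \<Rightarrow>\<^sub>0 'k)) \<Rightarrow> (nat \<Rightarrow> ('a list \<Rightarrow>\<^sub>0 'k)) \<Rightarrow> nat \<Rightarrow> ('a list \<Rightarrow>\<^sub>0 'k)" where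
  "cv circ X Y n = (\<Sum>j\<le>n. harm circ (X j) (Y (n - j)))"

definition zc :: "('a \<Rightarrow> 'a \<Rightarrow> ('a \<Rightarrow>\<^sub>0 'k::comm_ring_1)) \<Rightarrow> (nat \<Rightarrow> ('a \<Rightarrow>\<^sub>0 'k)) \<Rightarrow> (nat \<Rightarrow> ('a \<Rightarrow>\<^sub>0 'k)) \<Rightarrow> nat \<Rightarrow> ('a \<Rightarrow>\<^sub>0 'k)" where
  "zc circ x y l = (\<Sum>i\<le>l. zcirc circ (x i) (y (l - i)))"

lemma harm_sums: "harm circ (sum f I) (sum g J) = (\<Sum>i\<in>I. \<Sum>j\<in>J. harm circ (f i) (g j))"
  unfolding harm_sum1 by (simp only: harm_sum2)

lemma conc_sums: "conc (sum f I) (sum g J) = (\<Sum>i\<in>I. \<Sum>j\<in>J. conc (f i) (g j))"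
  unfolding conc_sum1 by (simp only: conc_sum2)

lemma Lz_addX: "Lz x (X + Y) = Lz x X + Lz x Y"
  by (rule ext) (simp add: Lz_def sum.distrib)
lemma Lz_diffX: "Lz x (X - Y) = Lz x X - Lz x Y"
  by (rule ext) (simp add: Lz_def sum_subtractf)
lemma Lz_addx: "Lz (x + y) X = Lz x X + Lz y X"
  by (rule ext) (simp add: Lz_def sum.distrib)
lemma Lz_zerox: "Lz 0 X = 0"
  by (rule ext) (simp add: Lz_def)

context
  fixes circ :: "'a \<Rightarrow> 'a \<Rightarrow> ('a \<Rightarrow>\<^sub>0 'k::comm_ring_1)"
begin

lemma cv_add1: "cv circ (X + X') Y = cv circ X Y + cv circ X' Y"
  by (rule ext) (simp add: cv_def sum.distrib)
lemma cv_add2: "cv circ X (Y + Y') = cv circ X Y + cv circ X Y'"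
  by (rule ext) (simp add: cv_def sum.distrib)
lemma cv_diff1: "cv circ (X - X') Y = cv circ X Y - cv circ X' Y"
  by (rule ext) (simp add: cv_def sum_subtractf)
lemma cv_diff2: "cv circ X (Y - Y') = cv circ X Y - cv circ X Y'"
  by (rule ext) (simp add: cv_def sum_subtractf)

lemma cv_del1: "cv circ del Y = Y"
proof (rule ext)
  fix n
  have "cv circ del Y n = (\<Sum>j\<le>n. if j = 0 then Y n else 0)"
    unfolding cv_def by (rule sum.cong) (auto simp: del_def)
  then show "cv circ del Y n = Y n" by simp
qed

lemma cv_del2: "cv circ X del = X"
proof (rule ext)
  fix n
  have "cv circ X del n = (\<Sum>j\<le>n. if j = n then X n else 0)"
    unfolding cv_def by (rule sum.cong) (auto simp: del_def)
  then show "cv circ X del n = X n" by simp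
qed

lemma cv_rec:
  "cv circ (Lz x X) (Lz y Y) =
     Lz x (cv circ X (Lz y Y)) + Lz y (cv circ (Lz x X) Y) + Lz (zc circ x y) (cv circ X Y)"
proof (rule ext)
  fix n
  define T1 where "T1 = (\<lambda>l i m k. conc (emb (x l)) (harm circ (X i) (conc (emb (y m)) (Y k))))"
  define T2 where "T2 = (\<lambda>l i m k. conc (emb (y m)) (harm circ (conc (emb (x l)) (X i)) (Y k)))"
  define T3 where "T3 = (\<lambda>l i m k. conc (emb (zcirc circ (x l) (y m))) (harm circ (X i) (Y k)))"
  have "cv circ (Lz x X) (Lz y Y) n =
     (\<Sum>j\<le>n. \<Sum>l\<le>j. \<Sum>m\<le>n-j. T1 l (j-l) m (n-j-m) + T2 l (j-l) m (n-j-m) + T3 l (j-l) m (n-j-m))"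
    by (simp add: cv_def Lz_def harm_rec T1_def T2_def T3_def harm_sums del: harm_sum1 harm_sum2)
  also have "\<dots> = (\<Sum>j\<le>n. \<Sum>l\<le>j. \<Sum>m\<le>n-j. T1 l (j-l) m (n-j-m))
      + (\<Sum>j\<le>n. \<Sum>l\<le>j. \<Sum>m\<le>n-j. T2 l (j-l) m (n-j-m))
      + (\<Sum>j\<le>n. \<Sum>l\<le>j. \<Sum>m\<le>n-j. T3 l (j-l) m (n-j-m))"
    by (simp only: sum.distrib)
  also have "(\<Sum>j\<le>n. \<Sum>l\<le>j. \<Sum>m\<le>n-j. T1 l (j-l) m (n-j-m)) = Lz x (cv circ X (Lz y Y)) n"
    by (simp only: R1[of T1 n]) (simp add: T1_def Lz_def cv_def)
  also have "(\<Sum>j\<le>n. \<Sum>l\<le>j. \<Sum>m\<le>n-j. T2 l (j-l) m (n-j-m)) = Lz y (cv circ (Lz x X) Y) n"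
    by (simp only: R2[of T2 n]) (simp add: T2_def Lz_def cv_def)
  also have "(\<Sum>j\<le>n. \<Sum>l\<le>j. \<Sum>m\<le>n-j. T3 l (j-l) m (n-j-m)) = Lz (zc circ x y) (cv circ X Y) n"
    by (simp only: R3[of T3 n]) (simp add: T3_def Lz_def cv_def zc_def conc_sums del: conc_sum1 conc_sum2)
  finally show "cv circ (Lz x X) (Lz y Y) n =
     (Lz x (cv circ X (Lz y Y)) + Lz y (cv circ (Lz x X) Y) + Lz (zc circ x y) (cv circ X Y)) n"
    by simp
qed

end

lemma uniq:
  assumes x0: "x 0 = 0" and X: "X = del + Lz x X" and Y: "Y = del + Lz x Y"
  shows "X = Y"
proof (rule ext)
  fix n show "X n = Y n"
  proof (induction n rule: less_induct)
    case (less n)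
    have "X n = del n + (\<Sum>l\<le>n. conc (emb (x l)) (X (n - l)))"
      by (subst X) (simp add: Lz_def)
    also have "(\<Sum>l\<le>n. conc (emb (x l)) (X (n - l))) = (\<Sum>l\<le>n. conc (emb (x l)) (Y (n - l)))"
    proof (rule sum.cong)
      fix l assume "l \<in> {..n}"
      show "conc (emb (x l)) (X (n - l)) = conc (emb (x l)) (Y (n - l))"
      proof (cases "l = 0")
        case True then show ?thesis using x0 by simp
      next
        case False then have "n - l < n" using \<open>l \<in> {..n}\<close> by auto
        then show ?thesis using less by simp
      qed
    qed simp
    also have "del n + (\<Sum>l\<le>n. conc (emb (x l)) (Y (n - l))) = Y n"
      by (subst (2) Y) (simp add: Lz_def)
    finally show ?case .
  qed
qed


lemma prod_geo:
  assumes X: "X = del + Lz x X" and Y: "Y = del + Lz y Y"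
  shows "cv circ X Y = del + Lz (x + y + zc circ x y) (cv circ X Y)"
proof -
  define Q where "Q = cv circ X Y"
  define R1 where "R1 = cv circ X (Lz y Y)"
  define R2 where "R2 = cv circ (Lz x X) Y"
  have "Q = cv circ X (del + Lz y Y)" unfolding Q_def by (rule arg_cong[of _ _ "cv circ X"]) (rule Y)
  then have q1: "Q = X + R1" unfolding R1_def by (simp add: cv_add2 cv_del2)
  have "Q = cv circ (del + Lz x X) Y" unfolding Q_def by (rule arg_cong[of _ _ "\<lambda>Z. cv circ Z Y"]) (rule X)
  then have q2: "Q = Y + R2" unfolding R2_def by (simp add: cv_add1 cv_del1)
  have "R1 = cv circ (del + Lz x X) (Lz y Y)" unfolding R1_def by (rule arg_cong[of _ _ "\<lambda>Z. cv circ Z (Lz y Y)"]) (rule X)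
  then have q3: "R1 = Lz y Y + (Lz x R1 + Lz y R2 + Lz (zc circ x y) Q)"
    unfolding R1_def R2_def Q_def by (simp add: cv_add1 cv_del1 cv_rec)
  have e1: "R1 = Q - X" using q1 by simp
  have e2: "R2 = Q - Y" using q2 by simp
  have x0: "X - Lz x X = del" using X by (metis add_diff_cancel)
  have "Q = X + (Lz y Y + (Lz x R1 + Lz y R2 + Lz (zc circ x y) Q))"
    using q1 q3 by metis
  also have "\<dots> = X + (Lz y Y + (Lz x (Q - X) + Lz y (Q - Y) + Lz (zc circ x y) Q))"
    by (simp only: e1 e2)
  also have "\<dots> = (X - Lz x X) + Lz (x + y + zc circ x y) Q"
    by (simp add: Lz_diffX Lz_addx algebra_simps)
  also have "\<dots> = del + Lz (x + y + zc circ x y) Q" by (simp only: x0)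
  finally show ?thesis unfolding Q_def .
qed

lemma H_lemma:
  assumes A: "A = Lz \<alpha> C + Lz \<gamma> A" and G: "G = del + Lz \<beta> G"
    and z: "\<beta> + \<gamma> + zc circ \<gamma> \<beta> = 0"
  shows "cv circ A G = Lz (\<alpha> + zc circ \<alpha> \<beta>) (cv circ C G)"
proof -
  define H where "H = cv circ A G"
  define K where "K = cv circ C G"
  define P1 where "P1 = cv circ (Lz \<alpha> C) G"
  define P2 where "P2 = cv circ (Lz \<gamma> A) G"
  define R where "R = cv circ A (Lz \<beta> G)"
  define S where "S = cv circ C (Lz \<beta> G)"
  have "H = cv circ A (del + Lz \<beta> G)" unfolding H_def by (rule arg_cong[of _ _ "cv circ A"]) (rule G)
  then have h1: "H = A + R" unfolding R_def by (simp add: cv_add2 cv_del2)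
  have "K = cv circ C (del + Lz \<beta> G)" unfolding K_def by (rule arg_cong[of _ _ "cv circ C"]) (rule G)
  then have c1: "K = C + S" unfolding S_def by (simp add: cv_add2 cv_del2)
  have "R = cv circ (Lz \<alpha> C + Lz \<gamma> A) (Lz \<beta> G)" unfolding R_def by (rule arg_cong[of _ _ "\<lambda>Z. cv circ Z (Lz \<beta> G)"]) (rule A)
  then have h2: "R = (Lz \<alpha> S + Lz \<beta> P1 + Lz (zc circ \<alpha> \<beta>) K) + (Lz \<gamma> R + Lz \<beta> P2 + Lz (zc circ \<gamma> \<beta>) H)"
    unfolding S_def P1_def P2_def K_def H_def R_def by (simp add: cv_add1 cv_rec)
  have "H = cv circ (Lz \<alpha> C + Lz \<gamma> A) G" unfolding H_def by (rule arg_cong[of _ _ "\<lambda>Z. cv circ Z G"]) (rule A)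
  then have h3: "P1 + P2 = H" unfolding P1_def P2_def by (simp add: cv_add1)
  have e1: "R = H - A" using h1 by simp
  have e2: "S = K - C" using c1 by simp
  have a0: "A - Lz \<alpha> C - Lz \<gamma> A = 0" using A by (metis add_diff_cancel_left' diff_self)
  have "H = A + ((Lz \<alpha> S + Lz \<beta> P1 + Lz (zc circ \<alpha> \<beta>) K) + (Lz \<gamma> R + Lz \<beta> P2 + Lz (zc circ \<gamma> \<beta>) H))"
    using h1 h2 by metis
  also have "\<dots> = A + ((Lz \<alpha> (K - C) + Lz \<beta> P1 + Lz (zc circ \<alpha> \<beta>) K) + (Lz \<gamma> (H - A) + Lz \<beta> P2 + Lz (zc circ \<gamma> \<beta>) H))"
    by (simp only: e1 e2)
  also have "\<dots> = (A - Lz \<alpha> C - Lz \<gamma> A) + Lz (\<alpha> + zc circ \<alpha> \<beta>) K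
        + (Lz \<beta> (P1 + P2) + Lz \<gamma> H + Lz (zc circ \<gamma> \<beta>) H)"
    by (simp add: Lz_diffX Lz_addx Lz_addX algebra_simps)
  also have "\<dots> = Lz (\<alpha> + zc circ \<alpha> \<beta>) K + Lz (\<beta> + \<gamma> + zc circ \<gamma> \<beta>) H"
    by (simp only: a0 h3) (simp add: Lz_addx algebra_simps)
  also have "\<dots> = Lz (\<alpha> + zc circ \<alpha> \<beta>) K"
    by (simp only: z Lz_zerox) simp
  finally show ?thesis unfolding H_def K_def .
qed


primrec ca :: "('a \<Rightarrow> 'a \<Rightarrow> ('a \<Rightarrow>\<^sub>0 'k::comm_ring_1)) \<Rightarrow> ('a \<Rightarrow>\<^sub>0 'k) \<Rightarrow> ('a \<Rightarrow>\<^sub>0 'k) \<Rightarrow> nat \<Rightarrow> ('a \<Rightarrow>\<^sub>0 'k)" where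
  "ca circ b x 0 = x"
| "ca circ b x (Suc l) = ca circ b (zcirc circ x b) l"

lemma Lz_single:
  assumes "\<And>i. i \<noteq> k \<Longrightarrow> x i = 0"
  shows "Lz x X n = (if k \<le> n then conc (emb (x k)) (X (n - k)) else 0)"
proof -
  have "Lz x X n = (\<Sum>l\<le>n. if l = k then conc (emb (x k)) (X (n - k)) else 0)"
    unfolding Lz_def by (rule sum.cong) (auto simp: assms)
  then show ?thesis by simp
qed

lemma zc_single:
  assumes "\<And>i. i \<noteq> k \<Longrightarrow> x i = 0"
  shows "zc circ x y n = (if k \<le> n then zcirc circ (x k) (y (n - k)) else 0)"
proof -
  have "zc circ x y n = (\<Sum>l\<le>n. if l = k then zcirc circ (x k) (y (n - k)) else 0)"
    unfolding zc_def by (rule sum.cong) (auto simp: assms)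
  then show ?thesis by simp
qed

lemma scale_rec:
  assumes X: "X = del + Lz x X"
  shows "(\<lambda>k. smul (r ^ k) (X k)) = del + Lz (\<lambda>l. smul (r ^ l) (x l)) (\<lambda>k. smul (r ^ k) (X k))"
proof (rule ext)
  fix k
  have Xk: "X k = del k + Lz x X k" using fun_cong[OF X, of k] by simp
  have d: "smul (r ^ k) (del k) = del k" by (simp add: del_def)
  have s: "smul (r ^ k) (Lz x X k) = Lz (\<lambda>l. smul (r ^ l) (x l)) (\<lambda>k. smul (r ^ k) (X k)) k"
    unfolding Lz_def smul_sum
  proof (rule sum.cong)
    fix l assume "l \<in> {..k}"
    then have "r ^ l * r ^ (k - l) = r ^ k" by (simp flip: power_add)
    then show "smul (r ^ k) (conc (emb (x l)) (X (k - l))) = conc (emb (smul (r ^ l) (x l))) (smul (r ^ (k - l)) (X (k - l)))"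
      by (simp add: mult.commute)
  qed simp
  show "smul (r ^ k) (X k) = (del + Lz (\<lambda>l. smul (r ^ l) (x l)) (\<lambda>k. smul (r ^ k) (X k))) k"
    by (simp add: Xk smul_add_right d s)
qed

context
  fixes circ :: "'a \<Rightarrow> 'a \<Rightarrow> ('a \<Rightarrow>\<^sub>0 'k::comm_ring_1)"
    and b :: "'a \<Rightarrow>\<^sub>0 'k"
  assumes cc: "comm_circ circ"
begin

lemma zc_assoc: "zcirc circ (zcirc circ x y) z = zcirc circ x (zcirc circ y z)"
  using cc by (simp add: comm_circ_def)

lemma zc_ca: "zcirc circ x (ca circ b y m) = ca circ b (zcirc circ x y) m"
  by (induction m arbitrary: y) (simp_all add: zc_assoc)

lemma W:
  "conc (emb x) (Sr circ s (zpow b n)) + smul s (actz circ x (Sr circ s (zpow b n))) =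
   (\<Sum>l\<le>n. smul (s ^ l) (conc (emb (ca circ b x l)) (Sr circ s (zpow b (n - l)))))"
proof (induction n arbitrary: x)
  case 0
  then show ?case by simp
next
  case (Suc n)
  let ?T = "\<lambda>n. Sr circ s (zpow b n)"
  have T: "?T (Suc n) = conc (emb b) (?T n) + smul s (actz circ b (?T n))"
    by (simp add: Sr_conc_emb)
  have "actz circ x (?T (Suc n)) = conc (emb (zcirc circ x b)) (?T n) + smul s (actz circ (zcirc circ x b) (?T n))"
    unfolding T by (simp add: actz_conc_emb actz_actz[OF cc])
  also have "\<dots> = (\<Sum>l\<le>n. smul (s ^ l) (conc (emb (ca circ b (zcirc circ x b) l)) (?T (n - l))))"
    by (rule Suc.IH)
  finally have a: "actz circ x (?T (Suc n)) = \<dots>" .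
  show ?case
    by (simp only: a sum.atMost_Suc_shift) (simp add: smul_sum)
qed

end


definition er :: "('a \<Rightarrow> 'a \<Rightarrow> ('a \<Rightarrow>\<^sub>0 'k::comm_ring_1)) \<Rightarrow> ('a \<Rightarrow>\<^sub>0 'k) \<Rightarrow> 'k \<Rightarrow> nat \<Rightarrow> ('a \<Rightarrow>\<^sub>0 'k)" where
  "er circ b s l = (if l = 0 then 0 else smul (s ^ (l - 1)) (ca circ b b (l - 1)))"

context
  fixes circ :: "'a \<Rightarrow> 'a \<Rightarrow> ('a \<Rightarrow>\<^sub>0 'k::comm_ring_1)"
    and b :: "'a \<Rightarrow>\<^sub>0 'k"
  assumes cc: "comm_circ circ"
begin

lemma T_rec: "(\<lambda>n. Sr circ s (zpow b n)) = del + Lz (er circ b s) (\<lambda>n. Sr circ s (zpow b n))"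
proof (rule ext)
  fix n
  show "Sr circ s (zpow b n) = (del + Lz (er circ b s) (\<lambda>n. Sr circ s (zpow b n))) n"
  proof (cases n)
    case 0
    then show ?thesis by (simp add: del_def Lz_def er_def)
  next
    case (Suc m)
    have "Sr circ s (zpow b n) = (\<Sum>l\<le>m. smul (s ^ l) (conc (emb (ca circ b b l)) (Sr circ s (zpow b (m - l)))))"
      using W[OF cc, where b=b and x=b and s=s and n=m] Suc by (simp add: Sr_conc_emb)
    moreover have "Lz (er circ b s) (\<lambda>n. Sr circ s (zpow b n)) n =
        (\<Sum>l\<le>m. smul (s ^ l) (conc (emb (ca circ b b l)) (Sr circ s (zpow b (m - l)))))"
      unfolding Lz_def Suc by (simp only: sum.atMost_Suc_shift) (simp add: er_def)
    ultimately show ?thesis using Suc by (simp add: del_def)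
  qed
qed


definition Cs :: "'k \<Rightarrow> nat \<Rightarrow> ('a list \<Rightarrow>\<^sub>0 'k)" where
  "Cs r n = smul ((1 - r) ^ n) (zpow b n)"

definition cseq :: "'k \<Rightarrow> nat \<Rightarrow> ('a \<Rightarrow>\<^sub>0 'k)" where
  "cseq r l = (if l = 1 then smul (1 - r) b else 0)"

lemma C_rec: "Cs r = del + Lz (cseq r) (Cs r)"
proof (rule ext)
  fix n
  have L: "Lz (cseq r) (Cs r) n = (if 1 \<le> n then conc (emb (cseq r 1)) (Cs r (n - 1)) else 0)" for n
    by (rule Lz_single) (simp add: cseq_def)
  show "Cs r n = (del + Lz (cseq r) (Cs r)) n"
    by (cases n) (simp_all add: L del_def Cs_def cseq_def mult.commute)
qed

definition As :: "('a \<Rightarrow>\<^sub>0 'k) \<Rightarrow> 'k \<Rightarrow> nat \<Rightarrow> ('a list \<Rightarrow>\<^sub>0 'k)" where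
  "As a r n = (\<Sum>i\<le>n. smul ((- r) ^ i * (1 - r) ^ (n - i)) (conc (zpow b i) (conc (emb a) (zpow b (n - i)))))"

definition alpha :: "('a \<Rightarrow>\<^sub>0 'k) \<Rightarrow> nat \<Rightarrow> ('a \<Rightarrow>\<^sub>0 'k)" where
  "alpha a l = (if l = 0 then a else 0)"

definition gam :: "'k \<Rightarrow> nat \<Rightarrow> ('a \<Rightarrow>\<^sub>0 'k)" where
  "gam r l = (if l = 1 then smul (- r) b else 0)"

lemma A_rec: "As a r = Lz (alpha a) (Cs r) + Lz (gam r) (As a r)"
proof (rule ext)
  fix n
  have L1: "Lz (alpha a) (Cs r) n = conc (emb a) (Cs r n)" for n
    by (subst Lz_single[where k=0]) (simp_all add: alpha_def)
  have L2: "Lz (gam r) (As a r) n = (if 1 \<le> n then conc (emb (smul (- r) b)) (As a r (n - 1)) else 0)" for n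
    by (subst Lz_single[where k=1]) (simp_all add: gam_def)
  show "As a r n = (Lz (alpha a) (Cs r) + Lz (gam r) (As a r)) n"
  proof (cases n)
    case 0
    then show ?thesis by (simp add: L1 L2 As_def Cs_def)
  next
    case (Suc m)
    have "As a r n = smul ((1 - r) ^ Suc m) (conc (emb a) (zpow b (Suc m)))
       + (\<Sum>i\<le>m. smul ((- r) ^ Suc i * (1 - r) ^ (m - i)) (conc (zpow b (Suc i)) (conc (emb a) (zpow b (m - i)))))"
      unfolding As_def Suc by (simp only: sum.atMost_Suc_shift) simp
    also have "(\<Sum>i\<le>m. smul ((- r) ^ Suc i * (1 - r) ^ (m - i)) (conc (zpow b (Suc i)) (conc (emb a) (zpow b (m - i)))))
        = conc (emb (smul (- r) b)) (As a r m)"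
      unfolding As_def by (simp add: smul_sum conc_assoc mult_ac)
    finally show ?thesis using Suc by (simp add: L1 L2 Cs_def)
  qed
qed

definition bet :: "'k \<Rightarrow> nat \<Rightarrow> ('a \<Rightarrow>\<^sub>0 'k)" where
  "bet r l = smul (r ^ l) (er circ b 1 l)"

definition Gs :: "'k \<Rightarrow> nat \<Rightarrow> ('a list \<Rightarrow>\<^sub>0 'k)" where
  "Gs r k = smul (r ^ k) (Sr circ 1 (zpow b k))"

lemma G_rec: "Gs r = del + Lz (bet r) (Gs r)"
  unfolding Gs_def[abs_def] bet_def[abs_def] by (rule scale_rec) (rule T_rec)

lemma zsum1: "bet r + gam r + zc circ (gam r) (bet r) = 0"
proof (rule ext)
  fix l
  have Z: "zc circ (gam r) (bet r) l = (if 1 \<le> l then zcirc circ (smul (- r) b) (bet r (l - 1)) else 0)" for l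
    by (subst zc_single[where k=1]) (simp_all add: gam_def)
  show "(bet r + gam r + zc circ (gam r) (bet r)) l = 0 l"
  proof (cases l)
    case 0 then show ?thesis by (simp add: Z bet_def er_def gam_def)
  next
    case (Suc m)
    show ?thesis
    proof (cases m)
      case 0 then show ?thesis using Suc by (simp add: Z bet_def er_def gam_def smul_neg_left)
    next
      case (Suc k)
      have "zcirc circ b (ca circ b b k) = ca circ b b (Suc k)" by (simp add: zc_ca[OF cc])
      then show ?thesis using Suc \<open>l = Suc m\<close>
        by (simp add: Z bet_def er_def gam_def smul_neg_left smul_neg_right mult_ac)
    qed
  qed
qed

end

definition rho :: "('a \<Rightarrow> 'a \<Rightarrow> ('a \<Rightarrow>\<^sub>0 'k::comm_ring_1)) \<Rightarrow> ('a \<Rightarrow>\<^sub>0 'k) \<Rightarrow> ('a \<Rightarrow>\<^sub>0 'k) \<Rightarrow> 'k \<Rightarrow> nat \<Rightarrow> ('a \<Rightarrow>\<^sub>0 'k)" where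
  "rho circ b a r l = smul (r ^ l) (ca circ b a l)"


context
  fixes circ :: "'a \<Rightarrow> 'a \<Rightarrow> ('a \<Rightarrow>\<^sub>0 'k::comm_ring_1)"
    and b :: "'a \<Rightarrow>\<^sub>0 'k"
  assumes cc: "comm_circ circ"
begin

lemma zsum2: "alpha a + zc circ (alpha a) (bet circ b r) = rho circ b a r"
proof (rule ext)
  fix l
  have Z: "zc circ (alpha a) (bet circ b r) l = zcirc circ a (bet circ b r l)" for l
    by (subst zc_single[where k=0]) (simp_all add: alpha_def[OF cc])
  show "(alpha a + zc circ (alpha a) (bet circ b r)) l = rho circ b a r l"
  proof (cases l)
    case 0 then show ?thesis by (simp add: Z alpha_def[OF cc] bet_def[OF cc] er_def rho_def)
  next
    case (Suc m)
    have "zcirc circ a (ca circ b b m) = ca circ b a (Suc m)" by (simp add: zc_ca[OF cc])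
    then show ?thesis using Suc by (simp add: Z alpha_def[OF cc] bet_def[OF cc] er_def rho_def)
  qed
qed

lemma zsum3: "cseq b r + bet circ b r + zc circ (cseq b r) (bet circ b r) = er circ b r"
proof (rule ext)
  fix l
  have Z: "zc circ (cseq b r) (bet circ b r) l = (if 1 \<le> l then zcirc circ (smul (1 - r) b) (bet circ b r (l - 1)) else 0)" for l
    by (subst zc_single[where k=1]) (simp_all add: cseq_def[OF cc])
  have sm: "smul c1 Y + smul c2 Y = smul (c1 + c2) Y" for c1 c2 and Y :: "'a \<Rightarrow>\<^sub>0 'k"
    by (simp add: smul_add_left)
  show "(cseq b r + bet circ b r + zc circ (cseq b r) (bet circ b r)) l = er circ b r l"
  proof (cases l)
    case 0 then show ?thesis by (simp add: Z cseq_def[OF cc] bet_def[OF cc] er_def)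
  next
    case (Suc m)
    show ?thesis
    proof (cases m)
      case 0
      have "smul (1 - r) b + smul r b = b" by (simp add: sm)
      then show ?thesis using Suc 0 by (simp add: Z cseq_def[OF cc] bet_def[OF cc] er_def)
    next
      case (Suc k)
      have e: "zcirc circ b (ca circ b b k) = ca circ b b (Suc k)" by (simp add: zc_ca[OF cc])
      have c: "r * (r * r ^ k) + (1 - r) * (r * r ^ k) = r * r ^ k" by (simp add: algebra_simps)
      have "smul (r * (r * r ^ k)) (ca circ b b (Suc k)) + smul ((1 - r) * (r * r ^ k)) (ca circ b b (Suc k))
            = smul (r * r ^ k) (ca circ b b (Suc k))"
        by (simp only: sm c)
      then show ?thesis using Suc \<open>l = Suc m\<close> e
        by (simp add: Z cseq_def[OF cc] bet_def[OF cc] er_def mult_ac)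
    qed
  qed
qed

end


theorem proposition2p7:
  fixes circ :: "'a \<Rightarrow> 'a \<Rightarrow> ('a \<Rightarrow>\<^sub>0 'k::comm_ring_1)"
    and r :: 'k and a1 a2 :: "'a \<Rightarrow>\<^sub>0 'k" and q :: nat
  assumes Qalg: "\<And>n::nat. n > 0 \<Longrightarrow> of_nat n dvd (1::'k)"
    and circ: "comm_circ circ"
    and q: "q > 0"
  shows "Sr circ r (conc (emb a1) (zpow a2 q)) =
    (\<Sum>(i, j)\<in>{(i, j). i + j \<le> q}.
       smul ((-1) ^ i * r ^ (q - j) * (1 - r) ^ j)
         (harm circ (conc (zpow a2 i) (conc (emb a1) (zpow a2 j)))
                    (Sr circ 1 (zpow a2 (q - i - j)))))"
proof -
  note cc = circ
  define T where "T = (\<lambda>n. Sr circ r (zpow a2 n))"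
  have Trec: "T = del + Lz (er circ a2 r) T" unfolding T_def by (rule T_rec[OF cc])
  have Crec: "Cs a2 r = del + Lz (cseq a2 r) (Cs a2 r)" by (rule C_rec[OF cc])
  have Grec: "Gs circ a2 r = del + Lz (bet circ a2 r) (Gs circ a2 r)" by (rule G_rec[OF cc])
  have Q: "cv circ (Cs a2 r) (Gs circ a2 r) = del + Lz (er circ a2 r) (cv circ (Cs a2 r) (Gs circ a2 r))"
    using prod_geo[OF Crec Grec, where circ=circ] zsum3[OF cc, of a2 r] by simp
  have QT: "cv circ (Cs a2 r) (Gs circ a2 r) = T"
    by (rule uniq[OF _ Q Trec]) (simp add: er_def)
  have Arec: "As a2 a1 r = Lz (alpha a1) (Cs a2 r) + Lz (gam a2 r) (As a2 a1 r)" by (rule A_rec[OF cc])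
  have Hq: "cv circ (As a2 a1 r) (Gs circ a2 r) = Lz (rho circ a2 a1 r) T"
  proof -
    have "cv circ (As a2 a1 r) (Gs circ a2 r) = Lz (alpha a1 + zc circ (alpha a1) (bet circ a2 r)) (cv circ (Cs a2 r) (Gs circ a2 r))"
      by (rule H_lemma[OF Arec Grec zsum1[OF cc]])
    then show ?thesis by (simp only: zsum2[OF cc, where b=a2 and a=a1 and r=r] QT)
  qed
  have LHS: "Sr circ r (conc (emb a1) (zpow a2 q)) = Lz (rho circ a2 a1 r) T q"
    using W[OF cc, where b=a2 and x=a1 and s=r and n=q]
    by (simp add: Sr_conc_emb Lz_def rho_def T_def)
  have "(\<Sum>(i, j)\<in>{(i, j). i + j \<le> q}.
       smul ((-1) ^ i * r ^ (q - j) * (1 - r) ^ j)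
         (harm circ (conc (zpow a2 i) (conc (emb a1) (zpow a2 j)))
                    (Sr circ 1 (zpow a2 (q - i - j))))) =
      (\<Sum>k\<le>q. \<Sum>i\<le>k. smul ((-1) ^ i * r ^ (q - (k - i)) * (1 - r) ^ (k - i))
         (harm circ (conc (zpow a2 i) (conc (emb a1) (zpow a2 (k - i))))
                    (Sr circ 1 (zpow a2 (q - i - (k - i))))))"
    by (rule sum.triangle_reindex_eq)
  also have "\<dots> = (\<Sum>k\<le>q. \<Sum>i\<le>k. smul ((- r) ^ i * (1 - r) ^ (k - i) * r ^ (q - k))
         (harm circ (conc (zpow a2 i) (conc (emb a1) (zpow a2 (k - i))))
                    (Sr circ 1 (zpow a2 (q - k)))))"
  proof (rule sum.cong[OF refl], rule sum.cong[OF refl])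
    fix k i assume k: "k \<in> {..q}" and i: "i \<in> {..k}"
    have e1: "q - i - (k - i) = q - k" using i k by auto
    have qk: "q - (k - i) = i + (q - k)" using i k by auto
    have m: "(- r) ^ i = (-1) ^ i * r ^ i" by (rule power_minus)
    have e2: "(-1) ^ i * r ^ (q - (k - i)) * (1 - r) ^ (k - i) = (- r) ^ i * (1 - r) ^ (k - i) * r ^ (q - k)"
      unfolding m qk power_add by (simp only: mult_ac)
    show "smul ((-1) ^ i * r ^ (q - (k - i)) * (1 - r) ^ (k - i))
         (harm circ (conc (zpow a2 i) (conc (emb a1) (zpow a2 (k - i))))
                    (Sr circ 1 (zpow a2 (q - i - (k - i))))) =
          smul ((- r) ^ i * (1 - r) ^ (k - i) * r ^ (q - k))
         (harm circ (conc (zpow a2 i) (conc (emb a1) (zpow a2 (k - i))))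
                    (Sr circ 1 (zpow a2 (q - k))))"
      by (simp only: e1 e2)
  qed
  also have "\<dots> = cv circ (As a2 a1 r) (Gs circ a2 r) q"
    unfolding cv_def As_def[OF cc] Gs_def[OF cc] by (simp add: smul_sum mult_ac)
  finally have R: "(\<Sum>(i, j)\<in>{(i, j). i + j \<le> q}.
       smul ((-1) ^ i * r ^ (q - j) * (1 - r) ^ j)
         (harm circ (conc (zpow a2 i) (conc (emb a1) (zpow a2 j)))
                    (Sr circ 1 (zpow a2 (q - i - j))))) = cv circ (As a2 a1 r) (Gs circ a2 r) q" .
  show ?thesis unfolding R LHS Hq ..
qed

end
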